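(* Let $n\geq 2$. For every $1\leq k\leq \lceil n/2\rceil-1$, the complete graph $K_n$ is not strong $k$-cop-win. Moreover, $K_n$ is strong $\lceil n/2\rceil$-cop-win and $\lim_{m\to\infty}\mathrm{capt}_{\lceil n/2\rceil}(K_n,m)=1$.
   Context: All graphs are finite, simple, connected and reflexive (a player may stay in place). The game of $k$ cops and $m$ robbers on $G$: in round 0 the cops first choose starting vertices, then the robbers choose theirs. In each round $i\geq 1$, all $k$ cops move (each to an adjacent vertex or staying), then all $m$ robbers move likewise. Several players may occupy the same vertex. Whenever a cop and some robbers occupy the same vertex, those robbers are captured and take no further part in the game. Both sides have full information. The cops win if all robbers are captured after finitely many rounds. $G$ is $k$-cop-win if $k$ cops can always win against one robber. For a $k$-cop-win graph $G$, $\mathrm{capt}_k(G,m)$ is the index of the round in which the last robber is captured when $k$ cops play to minimize this index and $m$ robbers play to maximize it. $G$ is strong $k$-cop-win if $\lim_{m\to\infty}\mathrm{capt}_k(G,m)$ exists (and is finite). *)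

theory Defs
  imports Complex_Main
begin

text \<open>A graph is given by a vertex set V and an adjacency relation E
  (symmetric, irreflexive). Players may stay in place, so moves go to the
  closed neighbourhood.\<close>

definition closed_nbhd :: "'a set \<Rightarrow> ('a \<Rightarrow> 'a \<Rightarrow> bool) \<Rightarrow> 'a \<Rightarrow> 'a set" where
  "closed_nbhd V E v = {u \<in> V. u = v \<or> E v u}"

definition complete_graph :: "'a set \<Rightarrow> 'a \<Rightarrow> 'a \<Rightarrow> bool" where
  "complete_graph V u v \<longleftrightarrow> u \<in> V \<and> v \<in> V \<and> u \<noteq> v"

text \<open>Cop positions: c :: nat \<Rightarrow> 'a (indices < k).
  Robber positions: R :: nat \<Rightarrow> 'a option (indices < m; None = captured).\<close>

definition cop_at :: "(nat \<Rightarrow> 'a) \<Rightarrow> nat \<Rightarrow> 'a \<Rightarrow> bool" where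
  "cop_at c k v \<longleftrightarrow> (\<exists>i<k. c i = v)"

definition capture :: "(nat \<Rightarrow> 'a) \<Rightarrow> nat \<Rightarrow> (nat \<Rightarrow> 'a option) \<Rightarrow> (nat \<Rightarrow> 'a option)" where
  "capture c k R = (\<lambda>j. case R j of None \<Rightarrow> None
                      | Some v \<Rightarrow> (if cop_at c k v then None else Some v))"

definition all_caught :: "nat \<Rightarrow> (nat \<Rightarrow> 'a option) \<Rightarrow> bool" where
  "all_caught m R \<longleftrightarrow> (\<forall>j<m. R j = None)"

definition cops_move :: "'a set \<Rightarrow> ('a \<Rightarrow> 'a \<Rightarrow> bool) \<Rightarrow> nat \<Rightarrow> (nat \<Rightarrow> 'a) \<Rightarrow> (nat \<Rightarrow> 'a) \<Rightarrow> bool" where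
  "cops_move V E k c c' \<longleftrightarrow> (\<forall>i<k. c' i \<in> closed_nbhd V E (c i))"

definition robbers_move :: "'a set \<Rightarrow> ('a \<Rightarrow> 'a \<Rightarrow> bool) \<Rightarrow> nat \<Rightarrow> (nat \<Rightarrow> 'a option) \<Rightarrow> (nat \<Rightarrow> 'a option) \<Rightarrow> bool" where
  "robbers_move V E m R R' \<longleftrightarrow>
     (\<forall>j<m. (R j = None \<longrightarrow> R' j = None) \<and>
            (\<forall>v. R j = Some v \<longrightarrow> (\<exists>w. R' j = Some w \<and> w \<in> closed_nbhd V E v)))"

text \<open>cops_win_within V E k m t c R: from the position (c,R) reached at the end
  of some round r (after the robbers' move and captures), the k cops can force
  that all m robbers are captured by the end of round r + t.\<close>
fun cops_win_within :: "'a set \<Rightarrow> ('a \<Rightarrow> 'a \<Rightarrow> bool) \<Rightarrow> nat \<Rightarrow> nat \<Rightarrow> nat \<Rightarrow> (nat \<Rightarrow> 'a) \<Rightarrow> (nat \<Rightarrow> 'a option) \<Rightarrow> bool" where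
  "cops_win_within V E k m 0 c R = all_caught m R"
| "cops_win_within V E k m (Suc t) c R =
     (all_caught m R \<or>
      (\<exists>c'. cops_move V E k c c' \<and>
         (\<forall>R'. robbers_move V E m (capture c' k R) R' \<longrightarrow>
                 cops_win_within V E k m t c' (capture c' k R'))))"

text \<open>k cops can guarantee that all m robbers are captured by round t
  (round 0: cops place, then robbers place, then captures).\<close>
definition capt_within :: "'a set \<Rightarrow> ('a \<Rightarrow> 'a \<Rightarrow> bool) \<Rightarrow> nat \<Rightarrow> nat \<Rightarrow> nat \<Rightarrow> bool" where
  "capt_within V E k m t \<longleftrightarrow>
     (\<exists>c0. (\<forall>i<k. c0 i \<in> V) \<and>
        (\<forall>R0. (\<forall>j<m. \<exists>v\<in>V. R0 j = Some v) \<longrightarrow>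
              cops_win_within V E k m t c0 (capture c0 k R0)))"

definition cop_win :: "'a set \<Rightarrow> ('a \<Rightarrow> 'a \<Rightarrow> bool) \<Rightarrow> nat \<Rightarrow> bool" where
  "cop_win V E k \<longleftrightarrow> (\<exists>t. capt_within V E k 1 t)"

definition capt :: "'a set \<Rightarrow> ('a \<Rightarrow> 'a \<Rightarrow> bool) \<Rightarrow> nat \<Rightarrow> nat \<Rightarrow> nat" where
  "capt V E k m = (LEAST t. capt_within V E k m t)"

definition strong_cop_win :: "'a set \<Rightarrow> ('a \<Rightarrow> 'a \<Rightarrow> bool) \<Rightarrow> nat \<Rightarrow> bool" where
  "strong_cop_win V E k \<longleftrightarrow> cop_win V E k \<and>
     (\<exists>L::real. (\<lambda>m. real (capt V E k m)) \<longlonglongrightarrow> L)"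

end

theory Submission
  imports Defs
begin

fun rich :: "'a set \<Rightarrow> nat \<Rightarrow> nat set \<Rightarrow> bool" where
  "rich V 0 A = (A \<noteq> {})"
| "rich V (Suc t) A = (\<exists>f::nat \<Rightarrow> 'a. \<forall>v\<in>V. rich V t {j\<in>A. f j = v})"

lemma rich_mono: "rich V t A \<Longrightarrow> A \<subseteq> B \<Longrightarrow> rich V t B"
proof (induction t arbitrary: A B)
  case 0 then show ?case by auto
next
  case (Suc t)
  then obtain f where f: "\<forall>v\<in>V. rich V t {j\<in>A. f j = v}" by (simp only: rich.simps) blast
  have "\<forall>v\<in>V. rich V t {j\<in>B. f j = v}"
  proof
    fix v assume "v \<in> V"
    with f have "rich V t {j\<in>A. f j = v}" by auto
    moreover have "{j\<in>A. f j = v} \<subseteq> {j\<in>B. f j = v}" using Suc.prems by auto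
    ultimately show "rich V t {j\<in>B. f j = v}" using Suc.IH by blast
  qed
  then show ?case by auto
qed

lemma rich_ne: "V \<noteq> {} \<Longrightarrow> rich V t A \<Longrightarrow> A \<noteq> {}"
proof (induction t arbitrary: A)
  case 0 then show ?case by auto
next
  case (Suc t)
  then obtain f where f: "\<forall>v\<in>V. rich V t {j\<in>A. f j = v}" by (simp only: rich.simps) blast
  obtain v where "v \<in> V" using Suc.prems by auto
  with f Suc.IH Suc.prems have "{j\<in>A. f j = v} \<noteq> {}" by blast
  then show ?case by auto
qed

lemma rich_interval:
  assumes e: "bij_betw e {0..<n} V"
  shows "rich V t {a..<a + n^t}"
proof (induction t arbitrary: a)
  case 0 then show ?case by auto
next
  case (Suc t)
  define f where "f j = e ((j - a) div n^t)" for j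
  have "\<forall>v\<in>V. rich V t {j\<in>{a..<a + n^Suc t}. f j = v}"
  proof
    fix v assume "v \<in> V"
    then obtain i where i: "i < n" "v = e i" using e by (auto simp: bij_betw_def)
    have "{a + i*n^t..<a + i*n^t + n^t} \<subseteq> {j\<in>{a..<a + n^Suc t}. f j = v}"
    proof
      fix j assume j: "j \<in> {a + i*n^t..<a + i*n^t + n^t}"
      then obtain r where r: "j = a + i*n^t + r" "r < n^t"
        by (metis atLeastLessThan_iff le_Suc_ex nat_add_left_cancel_less)
      have np: "n^t > 0" using r by linarith
      have "(j - a) div n^t = (r + i*n^t) div n^t" using r by (simp add: add.commute)
      also have "\<dots> = i" using np r by simp
      finally have "(j - a) div n^t = i" .
      moreover have "i*n^t + n^t \<le> n * n^t"
        using i(1) by (metis add_mult_distrib less_eq_Suc_le mult_le_mono1 mult_1 plus_1_eq_Suc add.commute)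
      ultimately show "j \<in> {j\<in>{a..<a + n^Suc t}. f j = v}"
        using r i by (auto simp: f_def)
    qed
    then show "rich V t {j\<in>{a..<a + n^Suc t}. f j = v}"
      using Suc.IH rich_mono by blast
  qed
  then show ?case by auto
qed


lemma cop_at_iff: "cop_at c k v \<longleftrightarrow> v \<in> c ` {..<k}"
  unfolding cop_at_def by auto

lemma nbhd_K: "v \<in> V \<Longrightarrow> closed_nbhd V (complete_graph V) v = V"
  unfolding closed_nbhd_def complete_graph_def by auto

lemma nbhd_sub: "closed_nbhd V E v \<subseteq> V"
  unfolding closed_nbhd_def by auto

lemma exists_outside:
  assumes "finite V" "finite B" "card B < card V"
  shows "\<exists>u\<in>V. u \<notin> B"
proof (rule ccontr)
  assume "\<not> ?thesis"
  then have "V \<subseteq> B" by auto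
  then have "card V \<le> card B" using assms card_mono by blast
  then show False using assms by simp
qed

lemma rich_all:
  assumes "finite V" "card V = n" "n ^ t \<le> m"
  shows "rich V t {j. j < m}"
proof -
  obtain e where e: "bij_betw e {0..<n} V"
    using assms ex_bij_betw_nat_finite by blast
  have "rich V t {0..<0 + n^t}" using rich_interval[OF e] by blast
  moreover have "{0..<0 + n^t} \<subseteq> {j. j < m}" using assms by auto
  ultimately show ?thesis using rich_mono by blast
qed

lemma lower:
  assumes fin: "finite V" and cV: "card V = n" and kn: "2*k < n"
  shows "\<forall>c R. (\<forall>j<m. \<forall>v. R j = Some v \<longrightarrow> v \<in> V) \<longrightarrow>
     (\<forall>v\<in>V. \<not> cop_at c k v \<longrightarrow> rich V t {j. j<m \<and> R j = Some v}) \<longrightarrow>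
     \<not> cops_win_within V (complete_graph V) k m t c R"
proof (induction t)
  case 0
  show ?case
  proof (intro allI impI)
    fix c R
    assume inV: "\<forall>j<m. \<forall>v. R j = Some v \<longrightarrow> v \<in> V"
      and ri: "\<forall>v\<in>V. \<not> cop_at c k v \<longrightarrow> rich V 0 {j. j<m \<and> R j = Some v}"
    have "card (c ` {..<k}) \<le> k" using card_image_le[of "{..<k}" c] by simp
    then have "card (c ` {..<k}) < card V" using kn cV by linarith
    then obtain u where "u \<in> V" "u \<notin> c ` {..<k}" using exists_outside fin by blast
    then have "\<not> cop_at c k u" by (simp add: cop_at_iff)
    then have "rich V 0 {j. j<m \<and> R j = Some u}" using ri \<open>u \<in> V\<close> by blast
    then have "{j. j<m \<and> R j = Some u} \<noteq> {}" by simp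
    then show "\<not> cops_win_within V (complete_graph V) k m 0 c R"
      by (auto simp: all_caught_def)
  qed
next
  case (Suc t)
  show ?case
  proof (intro allI impI)
    fix c R
    assume inV: "\<forall>j<m. \<forall>v. R j = Some v \<longrightarrow> v \<in> V"
      and ri: "\<forall>v\<in>V. \<not> cop_at c k v \<longrightarrow> rich V (Suc t) {j. j<m \<and> R j = Some v}"
    have Vne: "V \<noteq> {}" using kn cV by auto
    have nac: "\<not> all_caught m R"
    proof -
      have "card (c ` {..<k}) \<le> k" using card_image_le[of "{..<k}" c] by simp
      then have "card (c ` {..<k}) < card V" using kn cV by linarith
      then obtain u where "u \<in> V" "u \<notin> c ` {..<k}" using exists_outside fin by blast
      then have "\<not> cop_at c k u" by (simp add: cop_at_iff)
      then have "rich V (Suc t) {j. j<m \<and> R j = Some u}" using ri \<open>u \<in> V\<close> by blast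
      then have "{j. j<m \<and> R j = Some u} \<noteq> {}" using rich_ne[OF Vne] by blast
      then show ?thesis by (auto simp: all_caught_def)
    qed
    have "\<forall>c'. cops_move V (complete_graph V) k c c' \<longrightarrow>
         (\<exists>R'. robbers_move V (complete_graph V) m (capture c' k R) R' \<and>
                 \<not> cops_win_within V (complete_graph V) k m t c' (capture c' k R'))"
    proof (intro allI impI)
      fix c' assume "cops_move V (complete_graph V) k c c'"
      have "card (c ` {..<k} \<union> c' ` {..<k}) \<le> card (c ` {..<k}) + card (c' ` {..<k})"
        by (rule card_Un_le)
      also have "\<dots> \<le> k + k" using card_image_le[of "{..<k}" c] card_image_le[of "{..<k}" c'] by simp
      finally have cardlt: "card (c ` {..<k} \<union> c' ` {..<k}) < card V" using kn cV by simp
      obtain u where u: "u \<in> V" "u \<notin> c ` {..<k} \<union> c' ` {..<k}"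
        using exists_outside[OF fin _ cardlt] by blast
      define A where "A = {j. j<m \<and> R j = Some u}"
      have "\<not> cop_at c k u" using u by (simp add: cop_at_iff)
      then have "rich V (Suc t) A" using ri u unfolding A_def by blast
      then obtain f where f: "\<forall>v\<in>V. rich V t {j\<in>A. f j = v}" by (simp only: rich.simps) blast
      define R' where "R' j = (if j \<in> A \<and> f j \<in> V then Some (f j) else capture c' k R j)" for j
      have capA: "capture c' k R j = Some u" if "j \<in> A" for j
        using that u by (auto simp: A_def capture_def cop_at_iff)
      have rm: "robbers_move V (complete_graph V) m (capture c' k R) R'"
        unfolding robbers_move_def
      proof (intro allI impI conjI)
        fix j assume "j < m" "capture c' k R j = None"
        then show "R' j = None" using capA by (auto simp: R'_def)
      next
        fix j v assume j: "j < m" and cv: "capture c' k R j = Some v"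
        then have Rj: "R j = Some v" by (auto simp: capture_def split: option.splits if_splits)
        then have vV: "v \<in> V" using inV j by auto
        show "\<exists>w. R' j = Some w \<and> w \<in> closed_nbhd V (complete_graph V) v"
          using vV cv by (auto simp: R'_def nbhd_K)
      qed
      have inV': "\<forall>j<m. \<forall>v. capture c' k R' j = Some v \<longrightarrow> v \<in> V"
      proof (intro allI impI)
        fix j v assume j: "j < m" and h: "capture c' k R' j = Some v"
        then have "R' j = Some v" by (auto simp: capture_def split: option.splits if_splits)
        then show "v \<in> V" using inV j
          by (auto simp: R'_def capture_def split: if_splits option.splits)
      qed
      have ri': "\<forall>v\<in>V. \<not> cop_at c' k v \<longrightarrow> rich V t {j. j<m \<and> capture c' k R' j = Some v}"
      proof (intro ballI impI)
        fix v assume vV: "v \<in> V" and nc: "\<not> cop_at c' k v"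
        have "{j\<in>A. f j = v} \<subseteq> {j. j<m \<and> capture c' k R' j = Some v}"
          using vV nc by (auto simp: A_def R'_def capture_def)
        then show "rich V t {j. j<m \<and> capture c' k R' j = Some v}"
          using f vV rich_mono by blast
      qed
      show "\<exists>R'. robbers_move V (complete_graph V) m (capture c' k R) R' \<and>
                 \<not> cops_win_within V (complete_graph V) k m t c' (capture c' k R')"
      proof -
        have "\<not> cops_win_within V (complete_graph V) k m t c' (capture c' k R')"
          using Suc.IH inV' ri' by blast
        then show ?thesis using rm by blast
      qed
    qed
    then show "\<not> cops_win_within V (complete_graph V) k m (Suc t) c R"
      using nac unfolding cops_win_within.simps by blast
  qed
qed


lemma upper_win:
  fixes V :: "'a set"
  assumes k: "0 < k"
  shows "\<forall>c R. (\<forall>i<k. c i \<in> V) \<longrightarrow> (\<forall>j<m. \<forall>v. R j = Some v \<longrightarrow> v \<in> V) \<longrightarrow>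
     card {j. j<m \<and> R j \<noteq> None} \<le> t \<longrightarrow> cops_win_within V (complete_graph V) k m t c R"
proof (induction t)
  case 0
  show ?case
  proof (intro allI impI)
    fix c :: "nat \<Rightarrow> 'a" and R :: "nat \<Rightarrow> 'a option"
    assume "card {j. j<m \<and> R j \<noteq> None} \<le> 0"
    then have "{j. j<m \<and> R j \<noteq> None} = {}" by simp
    then show "cops_win_within V (complete_graph V) k m 0 c R" by (auto simp: all_caught_def)
  qed
next
  case (Suc t)
  show ?case
  proof (intro allI impI)
    fix c :: "nat \<Rightarrow> 'a" and R :: "nat \<Rightarrow> 'a option"
    assume cV: "\<forall>i<k. c i \<in> V" and inV: "\<forall>j<m. \<forall>v. R j = Some v \<longrightarrow> v \<in> V"
      and ca: "card {j. j<m \<and> R j \<noteq> None} \<le> Suc t"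
    show "cops_win_within V (complete_graph V) k m (Suc t) c R"
    proof (cases "all_caught m R")
      case True then show ?thesis by simp
    next
      case False
      then obtain j0 v where j0: "j0 < m" "R j0 = Some v" by (auto simp: all_caught_def)
      have vV: "v \<in> V" using inV j0 by auto
      define c' where "c' = (\<lambda>i::nat. v)"
      have cm: "cops_move V (complete_graph V) k c c'"
        using cV vV by (auto simp: cops_move_def c'_def nbhd_K)
      have cop: "cop_at c' k v" using k by (auto simp: cop_at_def c'_def)
      have "\<forall>R'. robbers_move V (complete_graph V) m (capture c' k R) R' \<longrightarrow>
                 cops_win_within V (complete_graph V) k m t c' (capture c' k R')"
      proof (intro allI impI)
        fix R' assume rm: "robbers_move V (complete_graph V) m (capture c' k R) R'"
        have inV': "\<forall>j<m. \<forall>w. capture c' k R' j = Some w \<longrightarrow> w \<in> V"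
        proof (intro allI impI)
          fix j w assume j: "j < m" and h: "capture c' k R' j = Some w"
          then have R'j: "R' j = Some w" by (auto simp: capture_def split: option.splits if_splits)
          show "w \<in> V"
          proof (cases "capture c' k R j")
            case None
            then show ?thesis using rm j R'j by (auto simp: robbers_move_def)
          next
            case (Some x)
            then obtain w' where "R' j = Some w'" "w' \<in> closed_nbhd V (complete_graph V) x"
              using rm j by (auto simp: robbers_move_def)
            then show ?thesis using R'j nbhd_sub by fastforce
          qed
        qed
        have sub: "{j. j<m \<and> capture c' k R' j \<noteq> None} \<subseteq> {j. j<m \<and> R j \<noteq> None} - {j0}"
        proof
          fix j assume "j \<in> {j. j<m \<and> capture c' k R' j \<noteq> None}"
          then have j: "j < m" "capture c' k R' j \<noteq> None" by auto
          then have "R' j \<noteq> None" by (auto simp: capture_def split: option.splits)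
          then have "capture c' k R j \<noteq> None" using rm j by (auto simp: robbers_move_def)
          moreover have "capture c' k R j0 = None" using j0 cop by (simp add: capture_def)
          ultimately show "j \<in> {j. j<m \<and> R j \<noteq> None} - {j0}"
            using j by (auto simp: capture_def split: option.splits)
        qed
        have "card {j. j<m \<and> capture c' k R' j \<noteq> None} \<le> card ({j. j<m \<and> R j \<noteq> None} - {j0})"
          by (rule card_mono[OF _ sub]) simp
        also have "\<dots> = card {j. j<m \<and> R j \<noteq> None} - 1"
          using j0 by (subst card_Diff_singleton) auto
        also have "\<dots> \<le> t" using ca by simp
        finally have "card {j. j<m \<and> capture c' k R' j \<noteq> None} \<le> t" .
        moreover have "\<forall>i<k. c' i \<in> V" using vV by (simp add: c'_def)
        moreover have IHi: "(\<forall>i<k. c' i \<in> V) \<longrightarrow> (\<forall>j<m. \<forall>w. capture c' k R' j = Some w \<longrightarrow> w \<in> V) \<longrightarrow>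
            card {j. j<m \<and> capture c' k R' j \<noteq> None} \<le> t \<longrightarrow>
            cops_win_within V (complete_graph V) k m t c' (capture c' k R')"
          by (rule spec[OF spec[OF Suc.IH]])
        ultimately show "cops_win_within V (complete_graph V) k m t c' (capture c' k R')"
          using inV' by blast
      qed
      then show ?thesis using cm by auto
    qed
  qed
qed

lemma capt_exists:
  assumes "0 < k" "v0 \<in> V"
  shows "capt_within V (complete_graph V) k m m"
  unfolding capt_within_def
proof (rule exI[of _ "\<lambda>i. v0"], intro conjI)
  show "\<forall>i<k. v0 \<in> V" using assms by simp
next
  show "\<forall>R0. (\<forall>j<m. \<exists>v\<in>V. R0 j = Some v) \<longrightarrow>
      cops_win_within V (complete_graph V) k m m (\<lambda>i. v0) (capture (\<lambda>i. v0) k R0)"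
  proof (intro allI impI)
  fix R0 assume R0: "\<forall>j<m. \<exists>v\<in>V. R0 j = Some v"
  have inV: "\<forall>j<m. \<forall>v. capture (\<lambda>i. v0) k R0 j = Some v \<longrightarrow> v \<in> V"
    using R0 by (auto simp: capture_def split: if_splits)
  have "card {j. j<m \<and> capture (\<lambda>i. v0) k R0 j \<noteq> None} \<le> card {..<m}"
    by (rule card_mono) auto
  then have "card {j. j<m \<and> capture (\<lambda>i. v0) k R0 j \<noteq> None} \<le> m" by simp
  moreover have "(\<forall>i<k. (\<lambda>i. v0) i \<in> V) \<longrightarrow> (\<forall>j<m. \<forall>w. capture (\<lambda>i. v0) k R0 j = Some w \<longrightarrow> w \<in> V) \<longrightarrow>
            card {j. j<m \<and> capture (\<lambda>i. v0) k R0 j \<noteq> None} \<le> m \<longrightarrow>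
            cops_win_within V (complete_graph V) k m m (\<lambda>i. v0) (capture (\<lambda>i. v0) k R0)"
    by (rule spec[OF spec[OF upper_win[OF assms(1)]]])
  ultimately show "cops_win_within V (complete_graph V) k m m (\<lambda>i. v0) (capture (\<lambda>i. v0) k R0)"
    using inV assms(2) by blast
  qed
qed

lemma cover:
  assumes fin: "finite V" and D: "D \<subseteq> V" "card D \<le> h" "h \<le> card V"
  shows "\<exists>c. c ` {..<h} \<subseteq> V \<and> D \<subseteq> c ` {..<h} \<and> card (c ` {..<h}) = h"
proof -
  have finD: "finite D" using fin D finite_subset by blast
  have "card (V - D) = card V - card D" using D finD by (simp add: card_Diff_subset)
  then have "h - card D \<le> card (V - D)" using D by simp
  then obtain X where X: "X \<subseteq> V - D" "card X = h - card D" "finite X"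
    by (rule obtain_subset_with_card_n)
  have cD: "card (D \<union> X) = h" using X finD D by (subst card_Un_disjoint) auto
  have "finite (D \<union> X)" using X finD by simp
  then obtain e where e: "bij_betw e {0..<card (D \<union> X)} (D \<union> X)"
    using ex_bij_betw_nat_finite by blast
  then have "e ` {..<h} = D \<union> X" using cD by (simp add: bij_betw_def lessThan_atLeast0)
  then show ?thesis using X D cD by (intro exI[of _ e]) auto
qed

lemma upper1:
  assumes fin: "finite V" and cV: "card V = n" and h: "n \<le> 2*h" "h \<le> n"
  shows "capt_within V (complete_graph V) h m (Suc 0)"
proof -
  obtain c0 where c0: "c0 ` {..<h} \<subseteq> V" "card (c0 ` {..<h}) = h"
    using cover[OF fin, of "{}" h] h cV by auto
  define F where "F = V - c0 ` {..<h}"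
  have "card F = n - h" using c0 cV fin unfolding F_def
    by (simp add: card_Diff_subset finite_subset)
  then have "card F \<le> h" using h by simp
  then obtain c' where c': "c' ` {..<h} \<subseteq> V" "F \<subseteq> c' ` {..<h}"
    using cover[OF fin, of F h] h cV by (auto simp: F_def)
  show ?thesis unfolding capt_within_def
  proof (rule exI[of _ c0], intro conjI)
    show "\<forall>i<h. c0 i \<in> V" using c0 by auto
  next
    show "\<forall>R0. (\<forall>j<m. \<exists>v\<in>V. R0 j = Some v) \<longrightarrow>
      cops_win_within V (complete_graph V) h m (Suc 0) c0 (capture c0 h R0)"
    proof (intro allI impI)
    fix R0 assume R0: "\<forall>j<m. \<exists>v\<in>V. R0 j = Some v"
    have cm: "cops_move V (complete_graph V) h c0 c'"
      unfolding cops_move_def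
    proof (intro allI impI)
      fix i assume "i < h"
      then have "c0 i \<in> V" "c' i \<in> V" using c0 c' by auto
      then show "c' i \<in> closed_nbhd V (complete_graph V) (c0 i)" by (simp add: nbhd_K)
    qed
    have none: "capture c' h (capture c0 h R0) j = None" if jm: "j < m" for j
    proof -
      obtain v where v: "v \<in> V" "R0 j = Some v" using R0 jm by auto
      show ?thesis
      proof (cases "cop_at c0 h v")
        case True then show ?thesis using v by (simp add: capture_def)
      next
        case False
        then have "v \<in> F" using v by (auto simp: F_def cop_at_iff)
        then have "cop_at c' h v" using c' by (auto simp: cop_at_iff)
        then show ?thesis using v False by (simp add: capture_def)
      qed
    qed
    have "\<forall>R'. robbers_move V (complete_graph V) m (capture c' h (capture c0 h R0)) R' \<longrightarrow>
                 all_caught m (capture c' h R')"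
      using none by (auto simp: robbers_move_def all_caught_def capture_def)
    then show "cops_win_within V (complete_graph V) h m (Suc 0) c0 (capture c0 h R0)"
      using cm by auto
  qed
  qed
qed

lemma not0:
  assumes fin: "finite V" and cV: "card V = n" and "k < n" "1 \<le> m"
  shows "\<not> capt_within V (complete_graph V) k m 0"
proof
  assume "capt_within V (complete_graph V) k m 0"
  then obtain c0 where c0: "\<forall>R0. (\<forall>j<m. \<exists>v\<in>V. R0 j = Some v) \<longrightarrow>
      cops_win_within V (complete_graph V) k m 0 c0 (capture c0 k R0)"
    unfolding capt_within_def by blast
  have "card (c0 ` {..<k}) \<le> k" using card_image_le[of "{..<k}" c0] by simp
  then have cl: "card (c0 ` {..<k}) < card V" using assms by linarith
  obtain u where u: "u \<in> V" "u \<notin> c0 ` {..<k}" using exists_outside[OF fin _ cl] by blast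
  have "cops_win_within V (complete_graph V) k m 0 c0 (capture c0 k (\<lambda>j. Some u))"
    by (rule c0[rule_format]) (use u in simp)
  then show False using u assms by (auto simp: all_caught_def capture_def cop_at_iff)
qed

lemma lower_capt:
  assumes fin: "finite V" and cV: "card V = n" and kn: "2*k < n" and m: "n ^ Suc s \<le> m"
  shows "\<not> capt_within V (complete_graph V) k m s"
proof
  assume "capt_within V (complete_graph V) k m s"
  then obtain c0 where c0: "\<forall>R0. (\<forall>j<m. \<exists>v\<in>V. R0 j = Some v) \<longrightarrow>
      cops_win_within V (complete_graph V) k m s c0 (capture c0 k R0)"
    unfolding capt_within_def by blast
  have "rich V (Suc s) {j. j < m}" using rich_all[OF fin cV m] .
  then obtain f where f: "\<forall>v\<in>V. rich V s {j\<in>{j. j<m}. f j = v}" by (simp only: rich.simps) blast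
  obtain v0 where v0: "v0 \<in> V" using kn cV by fastforce
  define R0 where "R0 j = Some (if f j \<in> V then f j else v0)" for j
  have "\<forall>j<m. \<exists>v\<in>V. R0 j = Some v" using v0 by (auto simp: R0_def)
  then have win: "cops_win_within V (complete_graph V) k m s c0 (capture c0 k R0)" using c0 by blast
  have inV: "\<forall>j<m. \<forall>v. capture c0 k R0 j = Some v \<longrightarrow> v \<in> V"
    using v0 by (auto simp: R0_def capture_def split: if_splits)
  have ri: "\<forall>v\<in>V. \<not> cop_at c0 k v \<longrightarrow> rich V s {j. j<m \<and> capture c0 k R0 j = Some v}"
  proof (intro ballI impI)
    fix v assume vV: "v \<in> V" and nc: "\<not> cop_at c0 k v"
    have "{j\<in>{j. j<m}. f j = v} \<subseteq> {j. j<m \<and> capture c0 k R0 j = Some v}"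
      using vV nc by (auto simp: R0_def capture_def)
    then show "rich V s {j. j<m \<and> capture c0 k R0 j = Some v}"
      using f vV rich_mono by blast
  qed
  have "\<not> cops_win_within V (complete_graph V) k m s c0 (capture c0 k R0)"
    using lower[OF fin cV kn] inV ri by blast
  then show False using win by blast
qed

lemma half: "nat \<lceil>real n / 2\<rceil> = (n + 1) div 2"
proof -
  have "\<lceil>real n / 2\<rceil> = int ((n + 1) div 2)"
  proof (cases "even n")
    case True
    then obtain q where "n = 2*q" by auto
    then show ?thesis by simp
  next
    case False
    then obtain q where q: "n = 2*q + 1" using oddE by blast
    have "real n / 2 = real q + 1/2" using q by simp
    then have "\<lceil>real n / 2\<rceil> = int q + 1" by (simp add: ceiling_eq_iff)
    then show ?thesis using q by simp
  qed
  then show ?thesis by simp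
qed


theorem mainTheorem15:
  fixes V :: "'a set" and n :: nat
  assumes "finite V" and "card V = n" and "n \<ge> 2"
  shows "(\<forall>k. 1 \<le> k \<and> k \<le> nat \<lceil>real n / 2\<rceil> - 1 \<longrightarrow>
              \<not> strong_cop_win V (complete_graph V) k)
       \<and> strong_cop_win V (complete_graph V) (nat \<lceil>real n / 2\<rceil>)
       \<and> (\<lambda>m. real (capt V (complete_graph V) (nat \<lceil>real n / 2\<rceil>) m)) \<longlonglongrightarrow> 1"
proof -
  note fin = assms(1) and cV = assms(2)
  define h where "h = nat \<lceil>real n / 2\<rceil>"
  have hd: "h = (n + 1) div 2" unfolding h_def by (rule half)
  have h1: "n \<le> 2*h" "h \<le> n" "h < n" "0 < h" using hd assms(3) by auto
  have "V \<noteq> {}" using cV assms(3) by auto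
  then obtain v0 where v0: "v0 \<in> V" by auto
  have capt1: "capt V (complete_graph V) h m = 1" if "1 \<le> m" for m
    unfolding capt_def
  proof (rule Least_equality)
    show "capt_within V (complete_graph V) h m 1"
      using upper1[OF fin cV h1(1) h1(2)] by simp
  next
    fix y assume "capt_within V (complete_graph V) h m y"
    moreover have "\<not> capt_within V (complete_graph V) h m 0"
      using not0[OF fin cV h1(3) that] .
    ultimately show "1 \<le> y" by (cases y) auto
  qed
  have lim: "(\<lambda>m. real (capt V (complete_graph V) h m)) \<longlonglongrightarrow> 1"
  proof (rule tendsto_eventually)
    show "\<forall>\<^sub>F m in sequentially. real (capt V (complete_graph V) h m) = 1"
      unfolding eventually_sequentially using capt1 by auto
  qed
  have strong: "strong_cop_win V (complete_graph V) h"
    unfolding strong_cop_win_def cop_win_def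
    using capt_exists[OF h1(4) v0, of 1] lim by blast
  have notstrong: "\<not> strong_cop_win V (complete_graph V) k" if k: "1 \<le> k" "k \<le> h - 1" for k
  proof
    assume "strong_cop_win V (complete_graph V) k"
    then obtain L where "(\<lambda>m. real (capt V (complete_graph V) k m)) \<longlonglongrightarrow> L"
      unfolding strong_cop_win_def by blast
    then have "Bseq (\<lambda>m. real (capt V (complete_graph V) k m))"
      using convergent_imp_Bseq convergent_def by blast
    then obtain K where K: "\<forall>m. norm (real (capt V (complete_graph V) k m)) \<le> K"
      using BseqE by blast
    have kn: "2*k < n" using k hd h1 by linarith
    define T where "T = nat \<lceil>K\<rceil>"
    define m where "m = n ^ Suc T"
    define s where "s = capt V (complete_graph V) k m"
    have ex: "\<exists>t. capt_within V (complete_graph V) k m t"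
      using capt_exists[of k v0 V m] k v0 by auto
    have cs: "capt_within V (complete_graph V) k m s"
      unfolding s_def capt_def using LeastI_ex[OF ex] .
    have "real s \<le> K" using K unfolding s_def by auto
    then have "s \<le> T" unfolding T_def by linarith
    then have "n ^ Suc s \<le> m" unfolding m_def using assms(3)
      by (intro power_increasing) auto
    then show False using lower_capt[OF fin cV kn] cs by blast
  qed
  show ?thesis using notstrong strong lim unfolding h_def by blast
qed

end
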